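(* Assume $0<x^0<u^*$ and let $c>0$ be such that $\eta(c)<u^*$. For $\epsilon\in(0,2(c\wedge(\overline x-c)))$ let $d_\epsilon=\frac{1-\epsilon(\overline x-c-\epsilon/2)}{c-\epsilon/2}$ and define the density $f_\epsilon$ on $[0,\overline x]$ by $f_\epsilon(x)=d_\epsilon$ for $x\in[0,c-\epsilon]$, $f_\epsilon(x)=(1-\frac{d_\epsilon}{\epsilon})x+c(\frac{d_\epsilon}{\epsilon}-1)+\epsilon$ for $x\in[c-\epsilon,c]$, and $f_\epsilon(x)=\epsilon$ for $x\in[c,\overline x]$ (and $f_\epsilon=0$ elsewhere). Suppose the law of $Y$ has density $f_\epsilon$ (so that $\bar y=\overline x$), let $b_\epsilon$ be the corresponding solution of the Cauchy problem below and $\overline m$ the corresponding point $\min\{m\in[0,\overline x]:b_\epsilon(m)=m\}$. Then there exists $\epsilon>0$ such that $\overline m<u^*$.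
   Context: $\mathcal I=(\alpha,\infty)$, $-\infty\le\alpha<0$; $\mu,\sigma:\mathcal I\to\mathbb R$ Lipschitz with $\sigma>0$, $\alpha,+\infty$ natural boundaries of $dX_t=\mu(X_t)dt+\sigma(X_t)dB_t$; $r>0$; $U:[0,\infty)\to[0,\infty)$. Assumptions: (a) $\mu,\sigma$ are $C^1$ with Lipschitz derivatives, $\mu(0)>rU(0)$, $\sup_{x\ge0}\mu'(x)<r$; (b) $U$ is nondecreasing, concave, $C^2$ on $[0,\infty)$, and for some $u^*\ge0$: $U'\ge1$ on $[0,u^*]$, $U'=1$ on $[u^*,\infty)$, $\mu U'+\frac12\sigma^2U''-rU>0$ on $[0,u^* )$; (c) $\mu$ is twice differentiable with $\mu''\le0$ on $[0,\infty)$. Notation. $\overline x>0$ is the unique point with $\mu-rU>0$ on $[0,\overline x)$ and $<0$ on $(\overline x,\infty)$. $\psi,\phi$ are the positive increasing and decreasing solutions of $\frac12\sigma^2u''+\mu u'-ru=0$. $D(x,m)=\psi'(x)\phi(m)-\phi'(x)\psi(m)$, $N(x,m)=\phi(x)\psi(m)-\psi(x)\phi(m)+D(x,m)\frac{\mu(x)}{r}-D(x,x)U(m)$, $G(x)=1-\mu'(x)/r$. For $m\in[0,\overline x]$, $\eta(m)$ is the unique solution $x\ge0$ of $N(x,m)=0$ (known to exist; $\eta$ is increasing with $\eta(\overline x)=\overline x$ and $\eta(m)\ge m$), and $x^0=\eta(0)$. Given a density $f$ of $Y$ with distribution function $F$ and support bound $\bar y$, let $E(x,m)=\frac{f(m)/F(m)}{G(x)}\frac{N(x,m)}{D(x,m)}$;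 the Cauchy problem is: find $b:[0,\overline x]\to[0,\overline x]$ with $b\in C([0,\overline x])\cap C^1((0,\overline x\wedge\bar y))$, $b(0)=x^0$, $b'(m)=E(b(m),m)$ on $(0,\overline x\wedge\bar y)$, $b\equiv b(\overline x\wedge\bar y)$ on $(\overline x\wedge\bar y,\overline x]$ (it has a unique solution). *)

theory Defs
  imports "HOL-Analysis.Analysis"
begin

definition state_space :: "ereal \<Rightarrow> real set" where
  "state_space \<alpha> = {x. \<alpha> < ereal x}"

definition int0 :: "(real \<Rightarrow> real) \<Rightarrow> real \<Rightarrow> real" where
  "int0 g x = (if 0 \<le> x then integral {0..x} g else - integral {x..0} g)"

text \<open>Scale density (reference point 0, which lies in I) and speed density.\<close>
definition scale_dens :: "(real \<Rightarrow> real) \<Rightarrow> (real \<Rightarrow> real) \<Rightarrow> real \<Rightarrow> real" where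
  "scale_dens \<mu> \<sigma> x = exp (- int0 (\<lambda>y. 2 * \<mu> y / (\<sigma> y)\<^sup>2) x)"

definition speed_dens :: "(real \<Rightarrow> real) \<Rightarrow> (real \<Rightarrow> real) \<Rightarrow> real \<Rightarrow> real" where
  "speed_dens \<mu> \<sigma> x = 2 / ((\<sigma> x)\<^sup>2 * scale_dens \<mu> \<sigma> x)"

text \<open>Feller's classification: a boundary is natural iff both Feller integrals
  (Sigma and N in Karlin--Taylor notation) diverge.\<close>
definition natural_right :: "(real \<Rightarrow> real) \<Rightarrow> (real \<Rightarrow> real) \<Rightarrow> bool" where
  "natural_right \<mu> \<sigma> \<longleftrightarrow>
     nn_integral lborel (\<lambda>\<xi>. indicator {0..} \<xi> *
        ennreal (integral {0..\<xi>} (speed_dens \<mu> \<sigma>) * scale_dens \<mu> \<sigma> \<xi>)) = \<infinity> \<and>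
     nn_integral lborel (\<lambda>\<xi>. indicator {0..} \<xi> *
        ennreal (integral {0..\<xi>} (scale_dens \<mu> \<sigma>) * speed_dens \<mu> \<sigma> \<xi>)) = \<infinity>"

definition natural_left :: "ereal \<Rightarrow> (real \<Rightarrow> real) \<Rightarrow> (real \<Rightarrow> real) \<Rightarrow> bool" where
  "natural_left \<alpha> \<mu> \<sigma> \<longleftrightarrow>
     nn_integral lborel (\<lambda>\<xi>. indicator {x \<in> state_space \<alpha>. x \<le> 0} \<xi> *
        ennreal (integral {\<xi>..0} (speed_dens \<mu> \<sigma>) * scale_dens \<mu> \<sigma> \<xi>)) = \<infinity> \<and>
     nn_integral lborel (\<lambda>\<xi>. indicator {x \<in> state_space \<alpha>. x \<le> 0} \<xi> *
        ennreal (integral {\<xi>..0} (scale_dens \<mu> \<sigma>) * speed_dens \<mu> \<sigma> \<xi>)) = \<infinity>"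

definition Dfun :: "(real \<Rightarrow> real) \<Rightarrow> (real \<Rightarrow> real) \<Rightarrow> real \<Rightarrow> real \<Rightarrow> real" where
  "Dfun \<psi> \<phi> x m = deriv \<psi> x * \<phi> m - deriv \<phi> x * \<psi> m"

definition Nfun :: "(real \<Rightarrow> real) \<Rightarrow> real \<Rightarrow> (real \<Rightarrow> real) \<Rightarrow> (real \<Rightarrow> real) \<Rightarrow> (real \<Rightarrow> real)
    \<Rightarrow> real \<Rightarrow> real \<Rightarrow> real" where
  "Nfun \<mu> r U \<psi> \<phi> x m =
     \<phi> x * \<psi> m - \<psi> x * \<phi> m + Dfun \<psi> \<phi> x m * \<mu> x / r - Dfun \<psi> \<phi> x x * U m"

definition Gfun :: "(real \<Rightarrow> real) \<Rightarrow> real \<Rightarrow> real \<Rightarrow> real" where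
  "Gfun \<mu> r x = 1 - deriv \<mu> x / r"

definition eta :: "(real \<Rightarrow> real) \<Rightarrow> real \<Rightarrow> (real \<Rightarrow> real) \<Rightarrow> (real \<Rightarrow> real) \<Rightarrow> (real \<Rightarrow> real)
    \<Rightarrow> real \<Rightarrow> real" where
  "eta \<mu> r U \<psi> \<phi> m = (THE x. 0 \<le> x \<and> Nfun \<mu> r U \<psi> \<phi> x m = 0)"

definition Efun :: "(real \<Rightarrow> real) \<Rightarrow> real \<Rightarrow> (real \<Rightarrow> real) \<Rightarrow> (real \<Rightarrow> real) \<Rightarrow> (real \<Rightarrow> real)
    \<Rightarrow> (real \<Rightarrow> real) \<Rightarrow> (real \<Rightarrow> real) \<Rightarrow> real \<Rightarrow> real \<Rightarrow> real" where
  "Efun \<mu> r U \<psi> \<phi> f F x m =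
     (f m / F m) / Gfun \<mu> r x * (Nfun \<mu> r U \<psi> \<phi> x m / Dfun \<psi> \<phi> x m)"

definition cauchy_sol :: "(real \<Rightarrow> real \<Rightarrow> real) \<Rightarrow> real \<Rightarrow> real \<Rightarrow> real \<Rightarrow> (real \<Rightarrow> real) \<Rightarrow> bool" where
  "cauchy_sol E x0 xbar ybar b \<longleftrightarrow>
     (\<forall>m\<in>{0..xbar}. b m \<in> {0..xbar}) \<and>
     continuous_on {0..xbar} b \<and>
     (\<forall>m\<in>{0<..<min xbar ybar}. b differentiable (at m)) \<and>
     continuous_on {0<..<min xbar ybar} (deriv b) \<and>
     b 0 = x0 \<and>
     (\<forall>m\<in>{0<..<min xbar ybar}. deriv b m = E (b m) m) \<and>
     (\<forall>m\<in>{min xbar ybar<..xbar}. b m = b (min xbar ybar))"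

definition d_eps :: "real \<Rightarrow> real \<Rightarrow> real \<Rightarrow> real" where
  "d_eps xbar c \<epsilon> = (1 - \<epsilon> * (xbar - c - \<epsilon> / 2)) / (c - \<epsilon> / 2)"

definition f_eps :: "real \<Rightarrow> real \<Rightarrow> real \<Rightarrow> real \<Rightarrow> real" where
  "f_eps xbar c \<epsilon> x =
     (if 0 \<le> x \<and> x \<le> c - \<epsilon> then d_eps xbar c \<epsilon>
      else if c - \<epsilon> \<le> x \<and> x \<le> c then
        (1 - d_eps xbar c \<epsilon> / \<epsilon>) * x + c * (d_eps xbar c \<epsilon> / \<epsilon> - 1) + \<epsilon>
      else if c \<le> x \<and> x \<le> xbar then \<epsilon>
      else 0)"

text \<open>Distribution function of Y (f_eps vanishes on the negative reals).\<close>
definition F_eps :: "real \<Rightarrow> real \<Rightarrow> real \<Rightarrow> real \<Rightarrow> real" where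
  "F_eps xbar c \<epsilon> m = integral {0..m} (f_eps xbar c \<epsilon>)"

end

theory Submission
  imports Defs
begin


lemma cont_bound:
  fixes f :: "real \<Rightarrow> real"
  assumes "continuous_on {a..b} f"
  shows "\<exists>B. \<forall>x\<in>{a..b}. \<bar>f x\<bar> \<le> B"
proof -
  have "bounded (f ` {a..b})"
    by (rule compact_imp_bounded[OF compact_continuous_image[OF assms compact_Icc]])
  then show ?thesis unfolding bounded_iff by auto
qed

locale S =
  fixes \<alpha> :: ereal and \<mu> \<sigma> U dU d2U \<psi> \<phi> :: "real \<Rightarrow> real"
    and r ustar xbar k a0 :: real
  assumes a0: "\<alpha> < ereal a0" "a0 < 0"
    and sigma_pos: "\<forall>x\<in>state_space \<alpha>. \<sigma> x > 0"
    and r_pos: "r > 0"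
    and mu_diff: "\<forall>x\<in>state_space \<alpha>. \<mu> differentiable (at x)"
    and sigma_diff: "\<forall>x\<in>state_space \<alpha>. \<sigma> differentiable (at x)"
    and k: "k < r" "\<forall>x\<ge>0. deriv \<mu> x \<le> k"
    and U_d1: "\<forall>x\<ge>0. (U has_real_derivative dU x) (at x within {0..})"
    and U_d2: "\<forall>x\<ge>0. (dU has_real_derivative d2U x) (at x within {0..})"
    and U_gen: "\<forall>x\<in>{0..<ustar}. \<mu> x * dU x + (\<sigma> x)\<^sup>2 / 2 * d2U x - r * U x > 0"
    and psi_diff: "\<forall>x\<in>state_space \<alpha>. \<psi> differentiable (at x) \<and> deriv \<psi> differentiable (at x)"
    and phi_diff: "\<forall>x\<in>state_space \<alpha>. \<phi> differentiable (at x) \<and> deriv \<phi> differentiable (at x)"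
    and psi_ode: "\<forall>x\<in>state_space \<alpha>.
        (\<sigma> x)\<^sup>2 / 2 * deriv (deriv \<psi>) x + \<mu> x * deriv \<psi> x - r * \<psi> x = 0"
    and phi_ode: "\<forall>x\<in>state_space \<alpha>.
        (\<sigma> x)\<^sup>2 / 2 * deriv (deriv \<phi>) x + \<mu> x * deriv \<phi> x - r * \<phi> x = 0"
    and psi_pos: "\<forall>x\<in>state_space \<alpha>. \<psi> x > 0"
    and phi_pos: "\<forall>x\<in>state_space \<alpha>. \<phi> x > 0"
    and psi_inc: "strict_mono_on (state_space \<alpha>) \<psi>"
    and phi_dec: "\<forall>x\<in>state_space \<alpha>. \<forall>y\<in>state_space \<alpha>. x < y \<longrightarrow> \<phi> y < \<phi> x"
    and xbar_pos: "xbar > 0"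
    and xbar_left: "\<forall>x\<in>{0..<xbar}. \<mu> x - r * U x > 0"
begin

lemma inI_mono: "x \<in> state_space \<alpha> \<Longrightarrow> x \<le> y \<Longrightarrow> y \<in> state_space \<alpha>"
proof -
  assume "x \<in> state_space \<alpha>" "x \<le> y"
  then have "\<alpha> < ereal x" "ereal x \<le> ereal y" by (auto simp: state_space_def)
  then show ?thesis unfolding state_space_def by (auto intro: less_le_trans)
qed

lemma a0I: "a0 \<in> state_space \<alpha>" using a0 by (simp add: state_space_def)

lemma inI: "a0 \<le> x \<Longrightarrow> x \<in> state_space \<alpha>"
  using inI_mono[OF a0I] by blast

lemma inI': "x > \<alpha> \<Longrightarrow> x \<in> state_space \<alpha>"
  unfolding state_space_def by auto

lemma dpsi: "x \<in> state_space \<alpha> \<Longrightarrow> (\<psi> has_real_derivative deriv \<psi> x) (at x)"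
  using psi_diff DERIV_deriv_iff_real_differentiable by blast
lemma ddpsi: "x \<in> state_space \<alpha> \<Longrightarrow> (deriv \<psi> has_real_derivative deriv (deriv \<psi>) x) (at x)"
  using psi_diff DERIV_deriv_iff_real_differentiable by blast
lemma dphi: "x \<in> state_space \<alpha> \<Longrightarrow> (\<phi> has_real_derivative deriv \<phi> x) (at x)"
  using phi_diff DERIV_deriv_iff_real_differentiable by blast
lemma ddphi: "x \<in> state_space \<alpha> \<Longrightarrow> (deriv \<phi> has_real_derivative deriv (deriv \<phi>) x) (at x)"
  using phi_diff DERIV_deriv_iff_real_differentiable by blast
lemma dmu: "x \<in> state_space \<alpha> \<Longrightarrow> (\<mu> has_real_derivative deriv \<mu> x) (at x)"
  using mu_diff DERIV_deriv_iff_real_differentiable by blast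

lemma sig_ne: "x \<in> state_space \<alpha> \<Longrightarrow> \<sigma> x \<noteq> 0"
  using sigma_pos by force

lemma psi2: "x \<in> state_space \<alpha> \<Longrightarrow> deriv (deriv \<psi>) x = 2 * (r * \<psi> x - \<mu> x * deriv \<psi> x) / (\<sigma> x)\<^sup>2"
  using psi_ode sig_ne[of x] by (auto simp: field_simps)
lemma phi2: "x \<in> state_space \<alpha> \<Longrightarrow> deriv (deriv \<phi>) x = 2 * (r * \<phi> x - \<mu> x * deriv \<phi> x) / (\<sigma> x)\<^sup>2"
  using phi_ode sig_ne[of x] by (auto simp: field_simps)

lemma dpsi_nonneg: assumes "x \<in> state_space \<alpha>" shows "deriv \<psi> x \<ge> 0"
proof (rule ccontr)
  assume "\<not> ?thesis"
  then obtain d where d: "d > 0" "\<forall>h>0. h < d \<longrightarrow> \<psi> (x + h) < \<psi> x"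
    using DERIV_neg_dec_right[OF dpsi[OF assms]] by force
  have "x + d/2 \<in> state_space \<alpha>" using inI_mono[OF assms, of "x + d/2"] d by auto
  then have "\<psi> x < \<psi> (x + d/2)" using psi_inc assms d(1) unfolding strict_mono_on_def by auto
  with d(2)[rule_format, of "d/2"] d(1) show False by auto
qed

lemma dphi_nonpos: assumes "x \<in> state_space \<alpha>" shows "deriv \<phi> x \<le> 0"
proof (rule ccontr)
  assume "\<not> ?thesis"
  then obtain d where d: "d > 0" "\<forall>h>0. h < d \<longrightarrow> \<phi> x < \<phi> (x + h)"
    using DERIV_pos_inc_right[OF dphi[OF assms]] by force
  have "x + d/2 \<in> state_space \<alpha>" using inI_mono[OF assms, of "x + d/2"] d by auto
  then have "\<phi> (x + d/2) < \<phi> x" using phi_dec assms d(1) by auto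
  with d(2)[rule_format, of "d/2"] d(1) show False by auto
qed

lemma dpsi_pos: assumes "x \<ge> 0" shows "deriv \<psi> x > 0"
proof (rule ccontr)
  assume neg: "\<not> ?thesis"
  have xI: "x \<in> state_space \<alpha>" using inI a0 assms by auto
  then have z: "deriv \<psi> x = 0" using dpsi_nonneg neg by force
  have "deriv (deriv \<psi>) x > 0" using psi2[OF xI] z psi_pos xI sig_ne[OF xI] r_pos by auto
  then obtain d where d: "d > 0" "\<forall>h>0. h < d \<longrightarrow> deriv \<psi> (x - h) < deriv \<psi> x"
    using DERIV_pos_inc_left[OF ddpsi[OF xI]] by force
  define h where "h = min (d/2) (- a0)"
  have "h > 0" "h < d" using d a0 by (auto simp: h_def)
  then have "deriv \<psi> (x - h) < 0" using d z by auto
  moreover have "x - h \<in> state_space \<alpha>" by (rule inI) (use assms in \<open>auto simp: h_def\<close>)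
  ultimately show False using dpsi_nonneg by force
qed


abbreviation "NN \<equiv> Nfun \<mu> r U \<psi> \<phi>"
abbreviation "DD \<equiv> Dfun \<psi> \<phi>"
abbreviation "GG \<equiv> Gfun \<mu> r"

definition g where "g y = 2 * \<mu> y / (\<sigma> y)\<^sup>2"
definition P where "P x = integral {a0..x} g"
definition p where "p x = exp (P x)"

lemma g_cont: "continuous_on {a0..b} g"
proof (rule continuous_at_imp_continuous_on, rule ballI)
  fix x assume "x \<in> {a0..b}"
  then have xI: "x \<in> state_space \<alpha>" using inI by auto
  have "isCont \<mu> x" using dmu[OF xI] DERIV_isCont by blast
  moreover have "isCont \<sigma> x" using sigma_diff xI differentiable_imp_continuous_within by blast
  ultimately show "isCont g x" unfolding g_def using sig_ne[OF xI]
    by (auto intro!: continuous_intros)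
qed

lemma P_deriv: assumes "x > a0" shows "(P has_real_derivative g x) (at x)"
proof -
  have "((\<lambda>x. integral {a0..x} g) has_real_derivative g x) (at x within {a0..x+1})"
    by (rule integral_has_real_derivative[OF g_cont]) (use assms in auto)
  moreover have "at x within {a0..x+1} = at x"
    by (rule at_within_interior) (use assms in auto)
  ultimately show ?thesis unfolding P_def by simp
qed

lemma p_deriv: assumes "x > a0" shows "(p has_real_derivative g x * p x) (at x)"
proof -
  have "((\<lambda>x. exp (P x)) has_real_derivative exp (P x) * g x) (at x)"
    by (rule DERIV_chain2[OF DERIV_exp P_deriv[OF assms]])
  then show ?thesis unfolding p_def by (simp add: mult.commute)
qed

lemma p_pos: "p x > 0" unfolding p_def by simp

lemma Q_deriv: assumes "x > a0"
  shows "((\<lambda>x. p x * NN x m) has_real_derivative - (p x * GG x * DD x m)) (at x)"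
proof -
  have xI: "x \<in> state_space \<alpha>" using inI assms by auto
  show ?thesis
    unfolding Nfun_def Dfun_def Gfun_def
    apply (rule derivative_eq_intros p_deriv[OF assms] dpsi[OF xI] ddpsi[OF xI] dphi[OF xI] ddphi[OF xI] dmu[OF xI] | use r_pos in simp)+
    apply (simp only: psi2[OF xI] phi2[OF xI] g_def)
    using sig_ne[OF xI] r_pos
    apply (simp add: field_simps power2_eq_square)
    done
qed


lemma G_pos: "x \<ge> 0 \<Longrightarrow> GG x \<ge> 1 - k / r"
  using k r_pos unfolding Gfun_def by (simp add: divide_right_mono)

lemma kr_pos: "1 - k / r > 0" using k r_pos by (simp add: field_simps)

lemma D_lower: assumes "x \<ge> 0" "m \<ge> 0" shows "DD x m \<ge> deriv \<psi> x * \<phi> m"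
proof -
  have "deriv \<phi> x \<le> 0" using dphi_nonpos inI a0 assms by auto
  moreover have "\<psi> m > 0" using psi_pos inI a0 assms by auto
  ultimately show ?thesis unfolding Dfun_def by (simp add: mult_nonpos_nonneg)
qed

lemma D_pos: assumes "x \<ge> 0" "m \<ge> 0" shows "DD x m > 0"
proof -
  have "\<phi> m > 0" using phi_pos inI a0 assms by auto
  then have "deriv \<psi> x * \<phi> m > 0" using dpsi_pos assms by auto
  then show ?thesis using D_lower[OF assms] by linarith
qed

lemma pGD_pos: assumes "x \<ge> 0" "m \<ge> 0" shows "p x * GG x * DD x m > 0"
  using p_pos[of x] G_pos[OF assms(1)] kr_pos D_pos[OF assms] by auto

lemma Q_strict: assumes "0 \<le> x1" "x1 < x2" "m \<ge> 0"
  shows "p x2 * NN x2 m < p x1 * NN x1 m"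
proof (rule DERIV_neg_imp_decreasing[OF assms(2)])
  fix x assume "x1 \<le> x" "x \<le> x2"
  then have "x \<ge> 0" "x > a0" using assms a0 by auto
  then show "\<exists>y. ((\<lambda>x. p x * NN x m) has_real_derivative y) (at x) \<and> y < 0"
    using Q_deriv pGD_pos assms(3) by (metis neg_less_0_iff_less)
qed

lemma N_after: assumes "0 \<le> x1" "x1 < x2" "m \<ge> 0" "NN x1 m \<le> 0" shows "NN x2 m < 0"
proof -
  have "p x2 * NN x2 m < p x1 * NN x1 m" by (rule Q_strict[OF assms(1-3)])
  also have "\<dots> \<le> 0" using p_pos[of x1] assms(4) by (simp add: mult_nonneg_nonpos)
  finally show ?thesis using p_pos[of x2] by (simp add: mult_less_0_iff)
qed

lemma N_before: assumes "0 \<le> x1" "x1 < x2" "m \<ge> 0" "NN x2 m \<ge> 0" shows "NN x1 m > 0"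
  using N_after[OF assms(1-3)] assms(4) by force

lemma pdpsi_mono: assumes "0 \<le> x" shows "p 0 * deriv \<psi> 0 \<le> p x * deriv \<psi> x"
proof (rule DERIV_nonneg_imp_nondecreasing[OF assms])
  fix t assume t: "0 \<le> t" "t \<le> x"
  then have ta: "t > a0" and tI: "t \<in> state_space \<alpha>" using a0 inI by auto
  have "((\<lambda>x. p x * deriv \<psi> x) has_real_derivative
       g t * p t * deriv \<psi> t + deriv (deriv \<psi>) t * p t) (at t)"
    by (rule DERIV_mult[OF p_deriv[OF ta] ddpsi[OF tI]])
  moreover have "g t * p t * deriv \<psi> t + deriv (deriv \<psi>) t * p t = p t * (2 * r * \<psi> t / (\<sigma> t)\<^sup>2)"
    using sig_ne[OF tI] unfolding psi2[OF tI] g_def by (simp add: field_simps power2_eq_square)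
  moreover have "p t * (2 * r * \<psi> t / (\<sigma> t)\<^sup>2) \<ge> 0"
    using p_pos[of t] r_pos psi_pos tI by (simp add: less_imp_le)
  ultimately show "\<exists>y. ((\<lambda>x. p x * deriv \<psi> x) has_real_derivative y) (at t) \<and> 0 \<le> y" by auto
qed

definition kap where "kap m = (1 - k / r) * \<phi> m * (p 0 * deriv \<psi> 0)"

lemma kap_pos: "m \<ge> 0 \<Longrightarrow> kap m > 0"
  unfolding kap_def using kr_pos phi_pos inI a0 p_pos[of 0] dpsi_pos[of 0] by auto

lemma pGD_lower: assumes "x \<ge> 0" "m \<ge> 0" shows "p x * GG x * DD x m \<ge> kap m"
proof -
  have phm: "\<phi> m > 0" using phi_pos inI a0 assms by auto
  have a: "p 0 * deriv \<psi> 0 \<le> p x * deriv \<psi> x" by (rule pdpsi_mono[OF assms(1)])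
  have b: "0 \<le> p 0 * deriv \<psi> 0" using p_pos[of 0] dpsi_pos[of 0] by auto
  have "kap m = (1 - k / r) * (\<phi> m * (p 0 * deriv \<psi> 0))" unfolding kap_def by simp
  also have "\<dots> \<le> GG x * (\<phi> m * (p x * deriv \<psi> x))"
    by (rule mult_mono) (use G_pos[OF assms(1)] a b phm kr_pos in \<open>auto intro!: mult_left_mono\<close>)
  also have "\<dots> = p x * GG x * (deriv \<psi> x * \<phi> m)" by simp
  also have "\<dots> \<le> p x * GG x * DD x m"
    by (rule mult_left_mono[OF D_lower[OF assms]]) (use p_pos[of x] G_pos[OF assms(1)] kr_pos in auto)
  finally show ?thesis .
qed

lemma Q_lin: assumes "x \<ge> 0" "m \<ge> 0" shows "p x * NN x m \<le> p 0 * NN 0 m - kap m * x"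
proof -
  have "p x * NN x m + kap m * x \<le> p 0 * NN 0 m + kap m * 0"
  proof (rule DERIV_nonpos_imp_nonincreasing[OF assms(1)])
    fix t assume t: "0 \<le> t" "t \<le> x"
    then have ta: "t > a0" using a0 by auto
    have "((\<lambda>x. p x * NN x m + kap m * x) has_real_derivative - (p t * GG t * DD t m) + kap m * 1) (at t)"
      by (rule DERIV_add[OF Q_deriv[OF ta]]) (rule DERIV_cmult[OF DERIV_ident])
    moreover have "- (p t * GG t * DD t m) + kap m * 1 \<le> 0" using pGD_lower[OF t(1) assms(2)] by simp
    ultimately show "\<exists>y. ((\<lambda>x. p x * NN x m + kap m * x) has_real_derivative y) (at t) \<and> y \<le> 0" by blast
  qed
  then show ?thesis by simp
qed

lemma N_diag: assumes "m \<ge> 0" "m < xbar" shows "NN m m > 0"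
proof -
  have "NN m m = DD m m * (\<mu> m - r * U m) / r" unfolding Nfun_def using r_pos by (simp add: field_simps)
  then show ?thesis using D_pos[OF assms(1) assms(1)] xbar_left assms r_pos by auto
qed

lemma root_ex: assumes "m \<ge> 0" "m < xbar"
  shows "\<exists>!x. 0 \<le> x \<and> NN x m = 0"
proof -
  have N0: "NN 0 m > 0"
  proof (cases "m = 0")
    case True then show ?thesis using N_diag assms by simp
  next
    case False then show ?thesis using N_before[of 0 m m] N_diag[OF assms] assms by auto
  qed
  define X where "X = p 0 * NN 0 m / kap m + 1"
  have "p 0 * NN 0 m / kap m > 0" using kap_pos[OF assms(1)] p_pos[of 0] N0 by (intro divide_pos_pos mult_pos_pos)
  then have X0: "X > 0" unfolding X_def by linarith
  have "p X * NN X m \<le> p 0 * NN 0 m - kap m * X" by (rule Q_lin) (use X0 assms in auto)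
  also have "\<dots> < 0" unfolding X_def using kap_pos[OF assms(1)] by (simp add: field_simps)
  finally have QX: "p X * NN X m < 0" .
  have cont: "continuous_on {0..X} (\<lambda>x. p x * NN x m)"
  proof (rule continuous_at_imp_continuous_on, rule ballI)
    fix x assume "x \<in> {0..X}"
    then have "x > a0" using a0 by auto
    then show "isCont (\<lambda>x. p x * NN x m) x" by (rule DERIV_isCont[OF Q_deriv])
  qed
  obtain x where x: "0 \<le> x" "x \<le> X" "p x * NN x m = 0"
    using IVT2'[of "\<lambda>x. p x * NN x m" X 0 0, OF _ _ _ cont] QX p_pos[of 0] N0 X0 by force
  have "NN x m = 0" using x(3) p_pos[of x] by simp
  moreover have "y = x" if "0 \<le> y" "NN y m = 0" for y
  proof (rule ccontr)
    assume "y \<noteq> x"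
    then consider "y < x" | "x < y" by linarith
    then show False
    proof cases
      case 1 then show ?thesis using N_after[of y x m] that assms \<open>NN x m = 0\<close> by auto
    next
      case 2 then show ?thesis using N_after[of x y m] that assms x \<open>NN x m = 0\<close> by auto
    qed
  qed
  ultimately show ?thesis using x(1) by blast
qed

lemma eta_prop: assumes "m \<ge> 0" "m < xbar"
  shows "eta \<mu> r U \<psi> \<phi> m \<ge> 0" "NN (eta \<mu> r U \<psi> \<phi> m) m = 0" "eta \<mu> r U \<psi> \<phi> m > m"
proof -
  have th: "0 \<le> eta \<mu> r U \<psi> \<phi> m \<and> NN (eta \<mu> r U \<psi> \<phi> m) m = 0"
    unfolding eta_def by (rule theI'[OF root_ex[OF assms]])
  then show "eta \<mu> r U \<psi> \<phi> m \<ge> 0" "NN (eta \<mu> r U \<psi> \<phi> m) m = 0" by auto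
  show "eta \<mu> r U \<psi> \<phi> m > m"
  proof (rule ccontr)
    assume "\<not> ?thesis"
    then consider "eta \<mu> r U \<psi> \<phi> m = m" | "eta \<mu> r U \<psi> \<phi> m < m" by linarith
    then show False
    proof cases
      case 1 then show ?thesis using th N_diag[OF assms] by auto
    next
      case 2 then show ?thesis using th N_after[of "eta \<mu> r U \<psi> \<phi> m" m m] N_diag[OF assms] assms by auto
    qed
  qed
qed


lemma U_cont: "continuous_on {0..} U"
  using U_d1 DERIV_continuous continuous_on_eq_continuous_within by (metis atLeast_iff)

lemma at_pos: "m > 0 \<Longrightarrow> at m within {0..} = at (m::real)"
  by (rule at_within_interior) simp

lemma U_deriv_at: assumes "m > 0" shows "(U has_real_derivative dU m) (at m)"
proof -
  have "(U has_real_derivative dU m) (at m within {0..})" using U_d1 assms by simp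
  then show ?thesis using at_pos[OF assms] by simp
qed

lemma dU_deriv_at: assumes "m > 0" shows "(dU has_real_derivative d2U m) (at m)"
proof -
  have "(dU has_real_derivative d2U m) (at m within {0..})" using U_d2 assms by simp
  then show ?thesis using at_pos[OF assms] by simp
qed

lemma cont_psi: "continuous_on {a..b} \<psi>" if "a \<ge> a0" for a b
  by (rule continuous_at_imp_continuous_on) (use that inI DERIV_isCont[OF dpsi] in auto)
lemma cont_phi: "continuous_on {a..b} \<phi>" if "a \<ge> a0" for a b
  by (rule continuous_at_imp_continuous_on) (use that inI DERIV_isCont[OF dphi] in auto)
lemma cont_dpsi: "continuous_on {a..b} (deriv \<psi>)" if "a \<ge> a0" for a b
  by (rule continuous_at_imp_continuous_on) (use that inI DERIV_isCont[OF ddpsi] in auto)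
lemma cont_dphi: "continuous_on {a..b} (deriv \<phi>)" if "a \<ge> a0" for a b
  by (rule continuous_at_imp_continuous_on) (use that inI DERIV_isCont[OF ddphi] in auto)
lemma cont_mu: "continuous_on {a..b} \<mu>" if "a \<ge> a0" for a b
  by (rule continuous_at_imp_continuous_on) (use that inI DERIV_isCont[OF dmu] in auto)
lemma cont_U: "continuous_on {a..b} U" if "a \<ge> 0" for a b
  by (rule continuous_on_subset[OF U_cont]) (use that in auto)

lemma maxp:
  assumes xs0: "c \<ge> 0" and Nc: "NN xs c = 0" and cxs: "c < xs" and xsu: "xs < ustar" and xsb: "xs < xbar"
    and m1: "0 \<le> m1" "m1 \<le> c"
  shows "NN xs m1 \<le> 0"
proof (rule ccontr)
  assume "\<not> ?thesis"
  then have hm1: "NN xs m1 > 0" by simp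
  define A where "A = \<phi> xs - deriv \<phi> xs * \<mu> xs / r"
  define B where "B = deriv \<psi> xs * \<mu> xs / r - \<psi> xs"
  define W where "W = DD xs xs"
  have hform: "NN xs m = A * \<psi> m + B * \<phi> m - W * U m" for m
    unfolding Nfun_def A_def B_def W_def Dfun_def by (simp add: algebra_simps add_divide_distrib diff_divide_distrib)
  define h where "h m = A * \<psi> m + B * \<phi> m - W * U m" for m
  define h1 where "h1 m = A * deriv \<psi> m + B * deriv \<phi> m - W * dU m" for m
  define h2 where "h2 m = A * deriv (deriv \<psi>) m + B * deriv (deriv \<phi>) m - W * d2U m" for m
  have hd: "(h has_real_derivative h1 m) (at m)" if "m > 0" for m
  proof -
    have mI: "m \<in> state_space \<alpha>" using that inI a0 by auto
    show ?thesis unfolding h_def h1_def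
      by (intro DERIV_diff DERIV_add DERIV_cmult dpsi[OF mI] dphi[OF mI] U_deriv_at[OF that])
  qed
  have h1d: "(h1 has_real_derivative h2 m) (at m)" if "m > 0" for m
  proof -
    have mI: "m \<in> state_space \<alpha>" using that inI a0 by auto
    show ?thesis unfolding h1_def h2_def
      by (intro DERIV_diff DERIV_add DERIV_cmult ddpsi[OF mI] ddphi[OF mI] dU_deriv_at[OF that])
  qed
  have m1xs: "m1 \<le> xs" using m1 cxs by auto
  have hcont: "continuous_on {m1..xs} h"
    unfolding h_def using m1 a0
    by (intro continuous_intros cont_psi cont_phi cont_U) auto
  obtain m0 where m0: "m0 \<in> {m1..xs}" "\<forall>y\<in>{m1..xs}. h m0 \<le> h y"
    using continuous_attains_inf[OF compact_Icc _ hcont] m1xs by auto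
  have "h m0 \<le> h c" using m0 m1 cxs by auto
  also have "h c = 0" using Nc hform h_def by simp
  finally have hm0: "h m0 \<le> 0" .
  have "h m1 > 0" using hm1 hform h_def by simp
  then have "m0 \<noteq> m1" using hm0 by auto
  moreover have "h xs > 0" using N_diag[of xs] xs0 cxs xsb hform h_def by simp
  then have "m0 \<noteq> xs" using hm0 by auto
  ultimately have m0i: "m1 < m0" "m0 < xs" using m0 by auto
  then have m0p: "m0 > 0" using m1 by auto
  have m0I: "m0 \<in> state_space \<alpha>" using m0p inI a0 by auto
  have h1z: "h1 m0 = 0"
  proof (rule DERIV_local_min[OF hd[OF m0p]])
    show "0 < min (m0 - m1) (xs - m0)" using m0i by auto
    show "\<forall>y. \<bar>m0 - y\<bar> < min (m0 - m1) (xs - m0) \<longrightarrow> h m0 \<le> h y"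
    proof (intro allI impI)
      fix y assume "\<bar>m0 - y\<bar> < min (m0 - m1) (xs - m0)"
      then have "y \<in> {m1..xs}" by (auto simp: abs_if split: if_splits)
      then show "h m0 \<le> h y" using m0(2) by blast
    qed
  qed
  have h2nn: "h2 m0 \<ge> 0"
  proof (rule ccontr)
    assume "\<not> ?thesis"
    then obtain d where d: "d > 0" "\<forall>t>0. t < d \<longrightarrow> h1 (m0 + t) < h1 m0"
      using DERIV_neg_dec_right[OF h1d[OF m0p]] by force
    define t where "t = min (d/2) ((xs - m0)/2)"
    have t1: "t \<le> (xs - m0)/2" "t \<le> d/2" unfolding t_def by (rule min.cobounded2, rule min.cobounded1)
    have "t > 0" using d m0i by (simp add: t_def)
    have tt: "m0 + t < xs"
    proof -
      have "2 * t \<le> xs - m0" using t1(1) by simp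
      then show ?thesis using m0i(2) \<open>t > 0\<close> by simp
    qed
    have t: "t > 0" "t < d" "m0 + t < xs" using d t1 tt \<open>t > 0\<close> by auto
    obtain z where z: "z > m0" "z < m0 + t" "h (m0 + t) - h m0 = (m0 + t - m0) * h1 z"
      using MVT2[of m0 "m0 + t" h h1] t hd m0p by force
    have "h1 z < 0" using d(2)[rule_format, of "z - m0"] z t h1z by auto
    then have "t * h1 z < 0" using t(1) by (simp add: mult_pos_neg)
    then have "h (m0 + t) < h m0" using z by simp
    moreover have "h m0 \<le> h (m0 + t)" using m0(2) t m0i by auto
    ultimately show False by simp
  qed
  have Wpos: "W > 0" unfolding W_def using D_pos xs0 cxs by auto
  have rho: "\<mu> m0 * dU m0 + (\<sigma> m0)\<^sup>2 / 2 * d2U m0 - r * U m0 > 0"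
    using U_gen m0p m0i xsu by auto
  have ident: "(\<sigma> m0)\<^sup>2 / 2 * h2 m0 + \<mu> m0 * h1 m0 - r * h m0
      = - W * (\<mu> m0 * dU m0 + (\<sigma> m0)\<^sup>2 / 2 * d2U m0 - r * U m0)"
    unfolding h_def h1_def h2_def psi2[OF m0I] phi2[OF m0I] using sig_ne[OF m0I]
    by (simp add: field_simps power2_eq_square)
  have "r * h m0 \<le> 0" using hm0 r_pos by (simp add: mult_nonneg_nonpos)
  moreover have "(\<sigma> m0)\<^sup>2 / 2 * h2 m0 \<ge> 0" using h2nn by simp
  ultimately have "(\<sigma> m0)\<^sup>2 / 2 * h2 m0 + \<mu> m0 * h1 m0 - r * h m0 \<ge> 0"
    using h1z by simp
  moreover have "- W * (\<mu> m0 * dU m0 + (\<sigma> m0)\<^sup>2 / 2 * d2U m0 - r * U m0) < 0"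
    using Wpos rho by simp
  ultimately show False using ident by linarith
qed

end


context
  fixes xbar c e :: real
  assumes e: "0 < e" "2 * e \<le> c" "2 * e * xbar \<le> 1" "c < xbar"
begin

lemma d_bound: "d_eps xbar c e * (c - e) \<ge> 1/4" "d_eps xbar c e > 0"
proof -
  have cpos: "c - e/2 > 0" "c - e > 0" using e by auto
  have "e * (xbar - c - e/2) \<le> e * xbar" using e by (intro mult_left_mono) auto
  then have num: "1 - e * (xbar - c - e/2) \<ge> 1/2" using e by linarith
  then show "d_eps xbar c e > 0" unfolding d_eps_def using cpos by simp
  have q: "(c - e) / (c - e/2) \<ge> 1/2" using cpos e by (simp add: field_simps)
  have "d_eps xbar c e * (c - e) = (1 - e * (xbar - c - e/2)) * ((c - e) / (c - e/2))"
    unfolding d_eps_def by simp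
  also have "\<dots> \<ge> 1/2 * (1/2)"
    by (rule mult_mono[OF num q]) (use num in auto)
  finally show "d_eps xbar c e * (c - e) \<ge> 1/4" by simp
qed

abbreviation "L x \<equiv> (1 - d_eps xbar c e / e) * x + c * (d_eps xbar c e / e - 1) + e"

lemma L_form: "L x = d_eps xbar c e * (c - x) / e + (e - (c - x))"
  using e by (simp add: field_simps)

lemma f_nonneg: "f_eps xbar c e x \<ge> 0"
proof -
  have dp: "d_eps xbar c e > 0" by (rule d_bound(2))
  have "L x \<ge> 0" if "c - e \<le> x" "x \<le> c"
  proof -
    have "d_eps xbar c e * (c - x) / e \<ge> 0" using dp that e by simp
    moreover have "e - (c - x) \<ge> 0" using that by simp
    ultimately show ?thesis unfolding L_form by simp
  qed
  then show ?thesis unfolding f_eps_def using dp e by auto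
qed

lemma f_right: "c < x \<Longrightarrow> x \<le> xbar \<Longrightarrow> f_eps xbar c e x = e"
  unfolding f_eps_def using e by auto

lemma f_left: "0 \<le> x \<Longrightarrow> x \<le> c - e \<Longrightarrow> f_eps xbar c e x = d_eps xbar c e"
  unfolding f_eps_def by auto

lemma f_cont: "continuous_on {0..xbar} (f_eps xbar c e)"
proof -
  have eq: "f_eps xbar c e x = (if x \<le> c - e then d_eps xbar c e else if x \<le> c then L x else e)"
    if "x \<in> {0..xbar}" for x
    using that e unfolding f_eps_def by auto
  have "continuous_on {0..xbar} (\<lambda>x. if x \<le> c - e then d_eps xbar c e else if x \<le> c then L x else e)"
  proof (rule continuous_on_cases_le)
    show "continuous_on {x \<in> {0..xbar}. x \<le> c - e} (\<lambda>x. d_eps xbar c e)" by (rule continuous_on_const)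
    show "continuous_on {x \<in> {0..xbar}. c - e \<le> x} (\<lambda>x. if x \<le> c then L x else e)"
    proof (rule continuous_on_cases_le)
      show "continuous_on {x \<in> {x \<in> {0..xbar}. c - e \<le> x}. x \<le> c} (\<lambda>x. L x)"
        by (intro continuous_on_add continuous_on_mult continuous_on_const continuous_on_id)
      show "continuous_on {x \<in> {x \<in> {0..xbar}. c - e \<le> x}. c \<le> x} (\<lambda>x. e)"
        by (rule continuous_on_const)
      show "continuous_on {x \<in> {0..xbar}. c - e \<le> x} (\<lambda>x. x)" by (rule continuous_on_id)
      show "L x = e" if "x \<in> {x \<in> {0..xbar}. c - e \<le> x}" "x = c" for x
        using that e by (simp add: L_form)
    qed
    show "continuous_on {0..xbar} (\<lambda>x. x)" by (rule continuous_on_id)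
    show "d_eps xbar c e = (if x \<le> c then L x else e)" if "x \<in> {0..xbar}" "x = c - e" for x
      using that e by (simp add: L_form)
  qed
  then show ?thesis by (rule continuous_on_eq) (use eq in simp)
qed

lemma f_int: "t \<le> xbar \<Longrightarrow> f_eps xbar c e integrable_on {0..t}"
  by (rule integrable_continuous_real, rule continuous_on_subset[OF f_cont]) auto

lemma F_nonneg: "t \<le> xbar \<Longrightarrow> F_eps xbar c e t \<ge> 0"
  unfolding F_eps_def by (rule integral_nonneg[OF f_int]) (auto intro: f_nonneg)

lemma F_lower: assumes "c - e \<le> t" "t \<le> xbar" shows "F_eps xbar c e t \<ge> 1/4"
proof -
  have "1/4 \<le> d_eps xbar c e * (c - e)" by (rule d_bound(1))
  also have "\<dots> = integral {0..c-e} (\<lambda>x. d_eps xbar c e)" using e by simp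
  also have "\<dots> = integral {0..c-e} (f_eps xbar c e)"
    by (rule integral_cong) (simp add: f_left)
  also have "\<dots> \<le> integral {0..t} (f_eps xbar c e)"
    by (rule integral_subset_le) (use assms e in \<open>auto intro: f_int f_nonneg\<close>)
  finally show ?thesis unfolding F_eps_def .
qed

end


lemma absN:
  fixes a1 a2 a3 a4 a5 a6 a7 a8 a9 a10 a11 a12 a13 a14 B r :: real
  assumes "\<bar>a1\<bar> \<le> B" "\<bar>a2\<bar> \<le> B" "\<bar>a3\<bar> \<le> B" "\<bar>a4\<bar> \<le> B" "\<bar>a5\<bar> \<le> B" "\<bar>a6\<bar> \<le> B"
    "\<bar>a7\<bar> \<le> B" "\<bar>a8\<bar> \<le> B" "\<bar>a9\<bar> \<le> B" "\<bar>a10\<bar> \<le> B" "\<bar>a11\<bar> \<le> B" "\<bar>a12\<bar> \<le> B"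
    "\<bar>a13\<bar> \<le> B" "\<bar>a14\<bar> \<le> B" "r > 0"
  shows "\<bar>a1 * a2 - a3 * a4 + (a5 * a6 - a7 * a8) * a9 / r - (a10 * a11 - a12 * a13) * a14\<bar>
     \<le> 2 * B^2 + 2 * B^3 / r + 2 * B^3"
proof -
  have B: "B \<ge> 0" using assms(1) by linarith
  have pr: "\<bar>x * y\<bar> \<le> B * B" if "\<bar>x\<bar> \<le> B" "\<bar>y\<bar> \<le> B" for x y :: real
    unfolding abs_mult by (rule mult_mono) (use that B in auto)
  have pr3: "\<bar>x * y\<bar> \<le> (2 * (B * B)) * B" if "\<bar>x\<bar> \<le> 2 * (B * B)" "\<bar>y\<bar> \<le> B" for x y :: real
    unfolding abs_mult by (rule mult_mono) (use that B in auto)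
  have d1: "\<bar>a1 * a2 - a3 * a4\<bar> \<le> 2 * (B * B)"
    using pr[OF assms(1,2)] pr[OF assms(3,4)] abs_triangle_ineq4[of "a1*a2" "a3*a4"] by linarith
  have d2: "\<bar>a5 * a6 - a7 * a8\<bar> \<le> 2 * (B * B)"
    using pr[OF assms(5,6)] pr[OF assms(7,8)] abs_triangle_ineq4[of "a5*a6" "a7*a8"] by linarith
  have d3: "\<bar>a10 * a11 - a12 * a13\<bar> \<le> 2 * (B * B)"
    using pr[OF assms(10,11)] pr[OF assms(12,13)] abs_triangle_ineq4[of "a10*a11" "a12*a13"] by linarith
  have t2: "\<bar>(a5 * a6 - a7 * a8) * a9 / r\<bar> \<le> (2 * (B * B)) * B / r"
    using pr3[OF d2 assms(9)] assms(15) by (simp add: abs_divide divide_right_mono)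
  have t3: "\<bar>(a10 * a11 - a12 * a13) * a14\<bar> \<le> (2 * (B * B)) * B" by (rule pr3[OF d3 assms(14)])
  have "\<bar>a1 * a2 - a3 * a4 + (a5 * a6 - a7 * a8) * a9 / r - (a10 * a11 - a12 * a13) * a14\<bar>
     \<le> \<bar>a1 * a2 - a3 * a4\<bar> + \<bar>(a5 * a6 - a7 * a8) * a9 / r\<bar> + \<bar>(a10 * a11 - a12 * a13) * a14\<bar>"
    using abs_triangle_ineq4[of "a1 * a2 - a3 * a4 + (a5 * a6 - a7 * a8) * a9 / r" "(a10 * a11 - a12 * a13) * a14"]
      abs_triangle_ineq[of "a1 * a2 - a3 * a4" "(a5 * a6 - a7 * a8) * a9 / r"] by linarith
  also have "\<dots> \<le> 2 * (B * B) + (2 * (B * B)) * B / r + (2 * (B * B)) * B"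
    using d1 t2 t3 by linarith
  finally show ?thesis by (simp add: power2_eq_square power3_eq_cube)
qed

theorem lemma5:
  fixes \<alpha> :: ereal
    and \<mu> \<sigma> U dU d2U \<psi> \<phi> :: "real \<Rightarrow> real"
    and r ustar xbar c :: real
  assumes alpha_neg: "\<alpha> < 0"
    and mu_lip: "\<exists>L. L-lipschitz_on (state_space \<alpha>) \<mu>"
    and sigma_lip: "\<exists>L. L-lipschitz_on (state_space \<alpha>) \<sigma>"
    and sigma_pos: "\<forall>x\<in>state_space \<alpha>. \<sigma> x > 0"
    and nat_left: "natural_left \<alpha> \<mu> \<sigma>"
    and nat_right: "natural_right \<mu> \<sigma>"
    and r_pos: "r > 0"
    and U_nonneg: "\<forall>x\<ge>0. U x \<ge> 0"
    \<comment> \<open>(a)\<close>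
    and mu_diff: "\<forall>x\<in>state_space \<alpha>. \<mu> differentiable (at x)"
    and sigma_diff: "\<forall>x\<in>state_space \<alpha>. \<sigma> differentiable (at x)"
    and dmu_lip: "\<exists>L. L-lipschitz_on (state_space \<alpha>) (deriv \<mu>)"
    and dsigma_lip: "\<exists>L. L-lipschitz_on (state_space \<alpha>) (deriv \<sigma>)"
    and mu0: "\<mu> 0 > r * U 0"
    and sup_dmu: "\<exists>k<r. \<forall>x\<ge>0. deriv \<mu> x \<le> k"
    \<comment> \<open>(b)\<close>
    and U_mono: "mono_on {0..} U"
    and U_concave: "concave_on {0..} U"
    and U_d1: "\<forall>x\<ge>0. (U has_real_derivative dU x) (at x within {0..})"
    and U_d2: "\<forall>x\<ge>0. (dU has_real_derivative d2U x) (at x within {0..})"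
    and U_C2: "continuous_on {0..} d2U"
    and ustar_nonneg: "ustar \<ge> 0"
    and dU_ge1: "\<forall>x\<in>{0..ustar}. dU x \<ge> 1"
    and dU_eq1: "\<forall>x\<ge>ustar. dU x = 1"
    and U_gen: "\<forall>x\<in>{0..<ustar}. \<mu> x * dU x + (\<sigma> x)\<^sup>2 / 2 * d2U x - r * U x > 0"
    \<comment> \<open>(c)\<close>
    and mu_d2: "\<forall>x\<ge>0. deriv \<mu> differentiable (at x)"
    and mu_concave: "\<forall>x\<ge>0. deriv (deriv \<mu>) x \<le> 0"
    \<comment> \<open>psi, phi: positive increasing / decreasing solutions of the ODE\<close>
    and psi_diff: "\<forall>x\<in>state_space \<alpha>. \<psi> differentiable (at x) \<and> deriv \<psi> differentiable (at x)"
    and phi_diff: "\<forall>x\<in>state_space \<alpha>. \<phi> differentiable (at x) \<and> deriv \<phi> differentiable (at x)"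
    and psi_ode: "\<forall>x\<in>state_space \<alpha>.
        (\<sigma> x)\<^sup>2 / 2 * deriv (deriv \<psi>) x + \<mu> x * deriv \<psi> x - r * \<psi> x = 0"
    and phi_ode: "\<forall>x\<in>state_space \<alpha>.
        (\<sigma> x)\<^sup>2 / 2 * deriv (deriv \<phi>) x + \<mu> x * deriv \<phi> x - r * \<phi> x = 0"
    and psi_pos: "\<forall>x\<in>state_space \<alpha>. \<psi> x > 0"
    and phi_pos: "\<forall>x\<in>state_space \<alpha>. \<phi> x > 0"
    and psi_inc: "strict_mono_on (state_space \<alpha>) \<psi>"
    and phi_dec: "\<forall>x\<in>state_space \<alpha>. \<forall>y\<in>state_space \<alpha>. x < y \<longrightarrow> \<phi> y < \<phi> x"
    \<comment> \<open>xbar\<close>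
    and xbar_pos: "xbar > 0"
    and xbar_left: "\<forall>x\<in>{0..<xbar}. \<mu> x - r * U x > 0"
    and xbar_right: "\<forall>x>xbar. \<mu> x - r * U x < 0"
    \<comment> \<open>hypotheses of the lemma\<close>
    and x0_pos: "0 < eta \<mu> r U \<psi> \<phi> 0"
    and x0_lt: "eta \<mu> r U \<psi> \<phi> 0 < ustar"
    and c_pos: "c > 0"
    and c_lt: "c < xbar"
    and eta_c: "eta \<mu> r U \<psi> \<phi> c < ustar"
  shows "\<exists>\<epsilon>. 0 < \<epsilon> \<and> \<epsilon> < 2 * min c (xbar - c) \<and>
     (\<forall>b. cauchy_sol (Efun \<mu> r U \<psi> \<phi> (f_eps xbar c \<epsilon>) (F_eps xbar c \<epsilon>))
                      (eta \<mu> r U \<psi> \<phi> 0) xbar xbar b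
          \<longrightarrow> Inf {m\<in>{0..xbar}. b m = m} < ustar)"
proof -
  obtain k where k: "k < r" "\<forall>x\<ge>0. deriv \<mu> x \<le> k" using sup_dmu by blast
  obtain a0 where a0: "\<alpha> < ereal a0" "ereal a0 < 0" using ereal_dense2[OF alpha_neg] by blast
  interpret S \<alpha> \<mu> \<sigma> U dU d2U \<psi> \<phi> r ustar xbar k a0
    using a0 k sigma_pos r_pos mu_diff sigma_diff U_d1 U_d2 U_gen psi_diff phi_diff psi_ode phi_ode
      psi_pos phi_pos psi_inc phi_dec xbar_pos xbar_left
    by unfold_locales simp_all
  define xs where "xs = eta \<mu> r U \<psi> \<phi> c"
  have xs: "xs \<ge> 0" "NN xs c = 0" "c < xs" using eta_prop[of c] c_pos c_lt unfolding xs_def by auto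
  have xsu: "xs < ustar" using eta_c xs_def by simp
  define e0 where "e0 = eta \<mu> r U \<psi> \<phi> 0"
  have e0: "e0 \<ge> 0" "NN e0 0 = 0" using eta_prop[of 0] xbar_pos unfolding e0_def by auto
  obtain B1 where B1: "\<forall>x\<in>{0..xbar}. \<bar>\<psi> x\<bar> \<le> B1" using cont_bound[OF cont_psi] a0 by force
  obtain B2 where B2: "\<forall>x\<in>{0..xbar}. \<bar>\<phi> x\<bar> \<le> B2" using cont_bound[OF cont_phi] a0 by force
  obtain B3 where B3: "\<forall>x\<in>{0..xbar}. \<bar>deriv \<psi> x\<bar> \<le> B3" using cont_bound[OF cont_dpsi] a0 by force
  obtain B4 where B4: "\<forall>x\<in>{0..xbar}. \<bar>deriv \<phi> x\<bar> \<le> B4" using cont_bound[OF cont_dphi] a0 by force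
  obtain B5 where B5: "\<forall>x\<in>{0..xbar}. \<bar>\<mu> x\<bar> \<le> B5" using cont_bound[OF cont_mu] a0 by force
  obtain B6 where B6: "\<forall>x\<in>{0..xbar}. \<bar>U x\<bar> \<le> B6" using cont_bound[OF cont_U] by force
  define Bt where "Bt = max (max (max B1 B2) (max B3 B4)) (max B5 B6)"
  have "\<bar>\<psi> 0\<bar> \<le> B1" using B1 xbar_pos by simp
  then have "B1 \<ge> 0" by linarith
  moreover have "B1 \<le> Bt" unfolding Bt_def by simp
  ultimately have Bt0: "Bt \<ge> 0" by linarith
  have bt: "\<bar>\<psi> y\<bar> \<le> Bt" "\<bar>\<phi> y\<bar> \<le> Bt" "\<bar>deriv \<psi> y\<bar> \<le> Bt" "\<bar>deriv \<phi> y\<bar> \<le> Bt"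
    "\<bar>\<mu> y\<bar> \<le> Bt" "\<bar>U y\<bar> \<le> Bt" if "y \<in> {0..xbar}" for y
    using B1 B2 B3 B4 B5 B6 that unfolding Bt_def by (simp_all add: le_max_iff_disj)
  define Nb where "Nb = 2 * Bt^2 + 2 * Bt^3 / r + 2 * Bt^3"
  have Nb: "\<bar>NN x m\<bar> \<le> Nb" if "x \<in> {0..xbar}" "m \<in> {0..xbar}" for x m
  proof -
    note bx = bt[OF that(1)] and bm = bt[OF that(2)]
    show ?thesis unfolding Nfun_def Dfun_def Nb_def
      by (rule absN[OF bx(2) bm(1) bx(1) bm(2) bx(3) bm(2) bx(4) bm(1) bx(5) bx(3) bx(2) bx(4) bx(1) bm(6) r_pos])
  qed
  obtain xm where xm: "xm \<in> {0..xbar}" "\<forall>y\<in>{0..xbar}. deriv \<psi> xm \<le> deriv \<psi> y"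
    using continuous_attains_inf[OF compact_Icc _ cont_dpsi[of 0 xbar]] a0 xbar_pos by auto
  define Dl where "Dl = deriv \<psi> xm * \<phi> xbar"
  have Dl: "Dl > 0" unfolding Dl_def using dpsi_pos[of xm] xm phi_pos inI[of xbar] a0 xbar_pos by auto
  have Dlow: "DD x m \<ge> Dl" if "x \<in> {0..xbar}" "m \<in> {0..xbar}" for x m
  proof -
    have "\<phi> xbar \<le> \<phi> m"
      using phi_dec inI[of m] inI[of xbar] a0 that by (cases "m = xbar") (auto intro: less_imp_le)
    then have "Dl \<le> deriv \<psi> x * \<phi> m" unfolding Dl_def
      by (intro mult_mono) (use xm that dpsi_pos[of xm] dpsi_pos[of x] phi_pos inI[of xbar] a0 xbar_pos in auto)
    also have "\<dots> \<le> DD x m" using D_lower that by auto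
    finally show ?thesis .
  qed
  define K where "K = 4 * Nb / ((1 - k / r) * Dl)"
  have K0: "K \<ge> 0" unfolding K_def Nb_def using Bt0 r_pos kr_pos Dl by auto
  have Ebound: "\<bar>Efun \<mu> r U \<psi> \<phi> (f_eps xbar c e) (F_eps xbar c e) x m\<bar> \<le> e * K"
    if "x \<in> {0..xbar}" "m \<in> {c<..<xbar}" "0 < e" "2 * e \<le> c" "2 * e * xbar \<le> 1" for x m e
  proof -
    have fm: "f_eps xbar c e m = e" by (rule f_right) (use that c_lt in auto)
    have Fm: "F_eps xbar c e m \<ge> 1/4" by (rule F_lower) (use that c_lt in auto)
    have G: "GG x \<ge> 1 - k / r" using G_pos that by auto
    have m0: "m \<in> {0..xbar}" using that c_pos by auto
    have "\<bar>Efun \<mu> r U \<psi> \<phi> (f_eps xbar c e) (F_eps xbar c e) x m\<bar>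
        = (e / F_eps xbar c e m) * (1 / GG x) * (\<bar>NN x m\<bar> / DD x m)"
      unfolding Efun_def fm using that Fm G kr_pos D_pos[of x m] m0
      by (simp add: abs_mult abs_divide)
    also have "\<dots> \<le> (4 * e) * (1 / (1 - k / r)) * (Nb / Dl)"
    proof (intro mult_mono)
      show "e / F_eps xbar c e m \<le> 4 * e" using Fm that by (simp add: field_simps)
      show "1 / GG x \<le> 1 / (1 - k / r)" using G kr_pos by (simp add: frac_le)
      show "\<bar>NN x m\<bar> / DD x m \<le> Nb / Dl"
      proof (rule frac_le)
        show "0 \<le> Nb" using Nb[OF that(1) m0] abs_ge_zero[of "NN x m"] by linarith
      qed (use Nb[OF that(1) m0] Dlow[OF that(1) m0] Dl in auto)
    qed (use that kr_pos Nb[OF that(1) m0] Dl G D_pos[of x m] m0 in auto)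
    also have "\<dots> = e * K" unfolding K_def using kr_pos Dl by (simp add: field_simps)
    finally show ?thesis .
  qed
  define e where "e = min (min (c/4) ((xbar - c)/2)) (min (1/(4*xbar)) ((ustar - xs)/(2*(xbar*K+1))))"
  have xK: "xbar * K + 1 > 0" using K0 xbar_pos by (simp add: add_nonneg_pos)
  have e_pos: "e > 0" unfolding e_def using c_pos c_lt xbar_pos xsu xK by auto
  have ea: "e \<le> c/4" "e \<le> (xbar - c)/2" "e \<le> 1/(4*xbar)" "e \<le> (ustar - xs)/(2*(xbar*K+1))"
    unfolding e_def
    by (rule min.coboundedI1, rule min.cobounded1, rule min.coboundedI1, rule min.cobounded2,
        rule min.coboundedI2, rule min.cobounded1, rule min.coboundedI2, rule min.cobounded2)
  have "e < 2 * c" "e < 2 * (xbar - c)" using ea e_pos c_pos c_lt by linarith+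
  then have e_lt: "e < 2 * min c (xbar - c)" by (auto simp: min_def)
  have e1: "2 * e \<le> c" using ea c_pos by linarith
  have e2: "2 * e * xbar \<le> 1"
  proof -
    have "e \<le> 1/(4*xbar)" by (fact ea(3))
    then have "e * xbar \<le> 1/4" using xbar_pos by (simp add: field_simps)
    then show ?thesis by simp
  qed
  have e3: "xbar * (e * K) \<le> (ustar - xs) / 2"
  proof -
    have "e \<le> (ustar - xs)/(2*(xbar*K+1))" by (fact ea(4))
    then have "e * (2*(xbar*K+1)) \<le> ustar - xs" using xK by (simp add: field_simps)
    moreover have "2 * (xbar * (e * K)) \<le> e * (2*(xbar*K+1))" using e_pos by (simp add: algebra_simps)
    ultimately have "2 * (xbar * (e * K)) \<le> ustar - xs" by (rule order_trans[rotated])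
    then show ?thesis by simp
  qed
  show ?thesis
  proof (intro exI conjI allI impI)
    show "0 < e" "e < 2 * min c (xbar - c)" by (fact e_pos, fact e_lt)
    fix b assume cs: "cauchy_sol (Efun \<mu> r U \<psi> \<phi> (f_eps xbar c e) (F_eps xbar c e))
                      (eta \<mu> r U \<psi> \<phi> 0) xbar xbar b"
    have bran: "\<forall>m\<in>{0..xbar}. b m \<in> {0..xbar}" and bcont: "continuous_on {0..xbar} b"
      and bdiff: "\<forall>m\<in>{0<..<xbar}. b differentiable (at m)" and b0: "b 0 = e0"
      and bode: "\<forall>m\<in>{0<..<xbar}. deriv b m = Efun \<mu> r U \<psi> \<phi> (f_eps xbar c e) (F_eps xbar c e) (b m) m"
      using cs unfolding cauchy_sol_def e0_def by auto
    have bder: "(b has_real_derivative deriv b m) (at m)" if "m \<in> {0<..<xbar}" for m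
      using bdiff that DERIV_deriv_iff_real_differentiable by blast
    have fixp: "Inf {m\<in>{0..xbar}. b m = m} < ustar" if "y \<in> {0..xbar}" "y < ustar" "b y \<le> y" for y
    proof -
      have cy: "continuous_on {0..y} b" by (rule continuous_on_subset[OF bcont]) (use that in auto)
      have "continuous_on {0..y} (\<lambda>m. b m - m)"
        by (intro continuous_intros cy)
      moreover have "b 0 - 0 \<ge> 0" using b0 x0_pos e0_def by simp
      moreover have "b y - y \<le> 0" using that by simp
      moreover have "0 \<le> y" using that by simp
      ultimately have "\<exists>x\<ge>0. x \<le> y \<and> b x - x = 0"
        by (intro IVT2'[of "\<lambda>m. b m - m" y 0 0]) simp_all
      then obtain x where x: "0 \<le> x" "x \<le> y" "b x - x = 0" by blast
      have "x \<in> {m\<in>{0..xbar}. b m = m}" using x that by auto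
      then have "Inf {m\<in>{0..xbar}. b m = m} \<le> x" by (intro cInf_lower) (auto intro: bdd_belowI[of _ 0])
      then show ?thesis using x that by linarith
    qed
    show "Inf {m\<in>{0..xbar}. b m = m} < ustar"
    proof (cases "xbar < ustar")
      case True
      then show ?thesis using fixp[of xbar] bran xbar_pos by auto
    next
      case False
      then have ub: "ustar \<le> xbar" by simp
      have xsb: "xs < xbar" using xsu ub by simp
      have Nneg: "NN xs m \<le> 0" if "0 \<le> m" "m \<le> c" for m
        by (rule maxp[OF _ xs(2) xs(3) xsu xsb that]) (use c_pos in auto)
      have e0xs: "e0 \<le> xs"
      proof (rule ccontr)
        assume "\<not> ?thesis"
        then have "NN xs 0 > 0" using N_before[of xs e0 0] e0 xs by auto
        then show False using Nneg[of 0] c_pos by simp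
      qed
      have barrier: "b m \<le> xs" if "0 \<le> m" "m \<le> c" for m
      proof (rule ccontr)
        assume "\<not> ?thesis"
        then have bm: "b m > xs" by simp
        define T where "T = {0..m} \<inter> b -` {..xs}"
        have "closed T" unfolding T_def
          by (rule continuous_closed_preimage) (use continuous_on_subset[OF bcont] that c_lt in auto)
        moreover have "bounded T" by (rule bounded_subset[OF bounded_closed_interval[of 0 m]]) (auto simp: T_def)
        ultimately have "compact T" using compact_eq_bounded_closed by blast
        moreover have "0 \<in> T" unfolding T_def using b0 e0xs that by auto
        ultimately obtain t0 where t0: "t0 \<in> T" "\<forall>t\<in>T. t \<le> t0"
          using compact_attains_sup[of T] by blast
        have t0m: "t0 < m" "0 \<le> t0" "b t0 \<le> xs" using t0(1) bm unfolding T_def by (auto simp: le_less)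
        have after: "b t > xs" if "t0 < t" "t \<le> m" for t
        proof (rule ccontr)
          assume "\<not> xs < b t"
          then have "t \<in> T" using that t0m unfolding T_def by auto
          then have "t \<le> t0" using t0(2) by blast
          then show False using that by simp
        qed
        have "b m \<le> b t0"
        proof (rule DERIV_nonpos_imp_decreasing_open[of t0 m b])
          show "t0 \<le> m" using t0m by simp
          show "continuous_on {t0..m} b" by (rule continuous_on_subset[OF bcont]) (use t0m that c_lt in auto)
          fix t assume t: "t0 < t" "t < m"
          then have tI: "t \<in> {0<..<xbar}" using t0m that c_lt by auto
          have bt: "b t > xs" "b t \<le> xbar" using after[of t] t bran tI by auto
          have Nt: "NN (b t) t < 0"
            by (rule N_after[OF xs(1) bt(1)]) (use tI Nneg[of t] t that in auto)
          have Gt: "GG (b t) > 0" using G_pos[of "b t"] kr_pos bt xs by auto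
          have Dt: "DD (b t) t > 0" using D_pos[of "b t" t] bt xs tI by auto
          have fF: "f_eps xbar c e t / F_eps xbar c e t \<ge> 0"
            using f_nonneg[of e c xbar t] F_nonneg[of e c xbar t] e_pos e1 e2 c_lt tI
            by (intro divide_nonneg_nonneg f_nonneg F_nonneg) auto
          have "Efun \<mu> r U \<psi> \<phi> (f_eps xbar c e) (F_eps xbar c e) (b t) t \<le> 0"
          proof -
            have "(f_eps xbar c e t / F_eps xbar c e t) / GG (b t) \<ge> 0" by (rule divide_nonneg_pos[OF fF Gt])
            moreover have "NN (b t) t / DD (b t) t \<le> 0" using divide_neg_pos[OF Nt Dt] by simp
            ultimately show ?thesis unfolding Efun_def by (rule mult_nonneg_nonpos)
          qed
          then show "\<exists>y. (b has_real_derivative y) (at t) \<and> y \<le> 0" using bder[OF tI] bode tI by auto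
        qed
        then show False using t0m bm by simp
      qed
      define ms where "ms = (xs + ustar) / 2"
      have ms: "c < ms" "ms < ustar" "ms < xbar" using xs xsu ub unfolding ms_def by auto
      have contc: "continuous_on {c..ms} b" by (rule continuous_on_subset[OF bcont]) (use ms c_pos in auto)
      have dc: "b differentiable (at x)" if "c < x" "x < ms" for x using bdiff that ms c_pos by auto
      obtain l z where lz: "c < z" "z < ms" "(b has_real_derivative l) (at z)" "b ms - b c = (ms - c) * l"
        using MVT[OF ms(1) contc dc] by blast
      have zI: "z \<in> {0<..<xbar}" using lz ms c_pos by auto
      have "l = deriv b z" using DERIV_unique[OF lz(3) bder[OF zI]] .
      then have "\<bar>l\<bar> \<le> e * K" using Ebound[of "b z" z e] bode zI bran e_pos e1 e2 lz(1) by auto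
      then have "(ms - c) * l \<le> xbar * (e * K)"
      proof -
        have "(ms - c) * l \<le> (ms - c) * (e * K)"
          by (rule mult_left_mono) (use \<open>\<bar>l\<bar> \<le> e * K\<close> ms in auto)
        also have "\<dots> \<le> xbar * (e * K)"
          by (rule mult_right_mono) (use ms c_pos K0 e_pos in auto)
        finally show ?thesis .
      qed
      then have "b ms \<le> ms" using lz(4) barrier[of c] c_pos e3 unfolding ms_def by auto
      then show ?thesis using fixp[of ms] ms c_pos by auto
    qed
  qed
qed


end
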